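(* In the noiseless discrete channel setting described in the context, suppose Assumption A holds, and suppose that for some sequence of sample sizes $n=n_N$ it holds that $\lim_{N\to\infty}\mathrm P(Z_{N,\delta}>0)=0$ for all $\delta\in(0,2]$. Then $$\lim_{N\to\infty}\frac{H(\theta\mid Y^n,X^n)}{H(\theta)}=0.$$
   Context: Setting. For each $N\in\mathbb N$: $\Theta=\Theta_N$ is a finite subset of the unit sphere of $\mathbb R^N$ of cardinality $M=M_N$, with $M_N\to\infty$ and $\langle\theta,\theta'\rangle\ge 0$ for all $\theta,\theta'\in\Theta$; $P_\Theta$ is the uniform distribution on $\Theta$; $\mathcal D=\mathcal D_N$ is a distribution on $\mathbb R^{L}$; $g=g_N:\mathbb R^L\times\mathbb R^N\to\mathcal Y$ with $\mathcal Y$ finite of cardinality independent of $N$. One draws $\theta\sim P_\Theta$, independently $X_1,\dots,X_n$ i.i.d. from $\mathcal D$, and sets $Y_i=g(X_i,\theta)$; $Y^n=(Y_i)_{i\le n}$, $X^n=(X_i)_{i\le n}$. $H$ denotes Shannon entropy (natural log), so $H(\theta)=\log M$. For $\delta\in[0,2]$, $Z_{N,\delta}$ is the number of $\theta'\in\Theta$ with $Y_i=g(X_i,\theta')$ for all $i\le n$ and $\|\theta-\theta'\|^2\ge\delta$. Assumption A: for $\theta,\theta'$ independent draws from $P_\Theta$, $\lim_{\delta\to0^+}\lim_{N\to\infty}\frac{\log\left(M\,P_\Theta^{\otimes2}(\langle\theta,\theta'\rangle\ge 1-\delta)\right)}{\log M}=0$; and for any $\theta\in\Theta$, if $\theta'\sim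 P_\Theta$, then for every $\epsilon>0$, $\lim_N P_\Theta(\langle\theta',\theta\rangle\ge\epsilon)=0$. *)

theory Defs
  imports "HOL-Probability.Probability"
begin

(* Vectors of R^N are represented as functions nat => real vanishing outside {..<N}. *)

definition ip :: "nat \<Rightarrow> (nat \<Rightarrow> real) \<Rightarrow> (nat \<Rightarrow> real) \<Rightarrow> real" where
  "ip N u v = (\<Sum>i<N. u i * v i)"

definition sqdist :: "nat \<Rightarrow> (nat \<Rightarrow> real) \<Rightarrow> (nat \<Rightarrow> real) \<Rightarrow> real" where
  "sqdist N u v = (\<Sum>i<N. (u i - v i)^2)"

definition on_unit_sphere :: "nat \<Rightarrow> (nat \<Rightarrow> real) set \<Rightarrow> bool" where
  "on_unit_sphere N T \<longleftrightarrow> (\<forall>t\<in>T. (\<forall>i\<ge>N. t i = 0) \<and> ip N t t = 1)"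

definition entropy_pmf :: "'a pmf \<Rightarrow> real" where
  "entropy_pmf p = - (\<Sum>a\<in>set_pmf p. pmf p a * ln (pmf p a))"

definition cond_entropy_pmf :: "('a \<times> 'b) pmf \<Rightarrow> real" where
  "cond_entropy_pmf J = entropy_pmf J - entropy_pmf (map_pmf snd J)"

definition sample_law :: "nat \<Rightarrow> 'x measure \<Rightarrow> (nat \<Rightarrow> 'x) measure" where
  "sample_law n D = PiM {..<n} (\<lambda>_. D)"

definition labels :: "('x \<Rightarrow> 't \<Rightarrow> 'y) \<Rightarrow> nat \<Rightarrow> (nat \<Rightarrow> 'x) \<Rightarrow> 't \<Rightarrow> 'y list" where
  "labels g n xs t = map (\<lambda>i. g (xs i) t) [0..<n]"

(* H(theta | Y^n, X^n), theta uniform on T, independent of X^n: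
   E_{X^n}[ H(theta | Y^n, X^n = xs) ] *)
definition cond_entropy_post ::
  "'t set \<Rightarrow> ('x \<Rightarrow> 't \<Rightarrow> 'y) \<Rightarrow> 'x measure \<Rightarrow> nat \<Rightarrow> real" where
  "cond_entropy_post T g D n =
     (\<integral>xs. cond_entropy_pmf (map_pmf (\<lambda>t. (t, labels g n xs t)) (pmf_of_set T))
        \<partial>(sample_law n D))"

(* P(Z_{N,delta} > 0), joint probability over theta ~ unif(T) and X^n ~ D^n *)
definition prob_Z_pos ::
  "nat \<Rightarrow> (nat \<Rightarrow> real) set \<Rightarrow> ('x \<Rightarrow> (nat \<Rightarrow> real) \<Rightarrow> 'y) \<Rightarrow> 'x measure \<Rightarrow> nat \<Rightarrow> real \<Rightarrow> real" where
  "prob_Z_pos N T g D n \<delta> =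
     (\<Sum>t\<in>T. measure (sample_law n D)
        {xs \<in> space (sample_law n D).
           \<exists>t'\<in>T. (\<forall>i<n. g (xs i) t' = g (xs i) t) \<and> sqdist N t t' \<ge> \<delta>}) / real (card T)"

end

theory Submission
  imports Defs
begin


lemma entropy_map_uniform:
  assumes fS: "finite S" and ne: "S \<noteq> {}"
  shows "entropy_pmf (map_pmf F (pmf_of_set S)) =
    - (\<Sum>s\<in>S. ln (real (card {s'\<in>S. F s' = F s}) / real (card S)) / real (card S))"
proof -
  let ?m = "real (card S)"
  let ?c = "\<lambda>b. real (card {s'\<in>S. F s' = b})"
  have pm: "pmf (map_pmf F (pmf_of_set S)) b = ?c b / ?m" for b
  proof -
    have "S \<inter> F -` {b} = {s'\<in>S. F s' = b}" by auto
    then show ?thesis using fS ne by (simp add: pmf_map measure_pmf_of_set)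
  qed
  have "(\<Sum>s\<in>S. ln (?c (F s) / ?m) / ?m)
      = (\<Sum>b\<in>F ` S. \<Sum>s\<in>{s'\<in>S. F s' = b}. ln (?c (F s) / ?m) / ?m)"
    by (rule sum.image_gen[OF fS])
  also have "\<dots> = (\<Sum>b\<in>F ` S. ?c b * (ln (?c b / ?m) / ?m))"
    by (intro sum.cong refl) simp
  also have "\<dots> = (\<Sum>b\<in>F ` S. pmf (map_pmf F (pmf_of_set S)) b * ln (pmf (map_pmf F (pmf_of_set S)) b))"
    by (intro sum.cong refl) (simp add: pm)
  finally show ?thesis unfolding entropy_pmf_def using fS ne by simp
qed

lemma cond_entropy_formula:
  assumes fS: "finite S" and ne: "S \<noteq> {}"
  shows "cond_entropy_pmf (map_pmf (\<lambda>t. (t, F t)) (pmf_of_set S)) =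
    (\<Sum>s\<in>S. ln (real (card {s'\<in>S. F s' = F s}))) / real (card S)"
proof -
  let ?m = "real (card S)"
  have m0: "?m > 0" using fS ne by (simp add: card_gt_0_iff)
  have c1: "real (card {s'\<in>S. (s', F s') = (s, F s)}) = 1" if "s \<in> S" for s
  proof -
    have "{s'\<in>S. (s', F s') = (s, F s)} = {s}" using that by auto
    then show ?thesis by simp
  qed
  have e1: "entropy_pmf (map_pmf (\<lambda>t. (t, F t)) (pmf_of_set S)) = ln ?m"
    using m0 by (simp add: entropy_map_uniform[OF fS ne] c1 ln_div cong: conj_cong)
  have cpos: "real (card {s'\<in>S. F s' = F s}) > 0" if "s \<in> S" for s
    using that fS by (auto simp: card_gt_0_iff)
  have "map_pmf snd (map_pmf (\<lambda>t. (t, F t)) (pmf_of_set S)) = map_pmf F (pmf_of_set S)"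
    by (simp add: pmf.map_comp o_def)
  then have e2: "entropy_pmf (map_pmf snd (map_pmf (\<lambda>t. (t, F t)) (pmf_of_set S))) =
     - (\<Sum>s\<in>S. (ln (real (card {s'\<in>S. F s' = F s})) - ln ?m) / ?m)"
    using cpos m0 by (simp add: entropy_map_uniform[OF fS ne] ln_div)
  have "(\<Sum>s\<in>S. (ln (real (card {s'\<in>S. F s' = F s})) - ln ?m) / ?m)
     = (\<Sum>s\<in>S. ln (real (card {s'\<in>S. F s' = F s}))) / ?m - ln ?m"
    using m0 by (simp add: sum_subtractf sum_divide_distrib[symmetric] diff_divide_distrib)
  then show ?thesis unfolding cond_entropy_pmf_def e1 e2 by simp
qed

lemma sqdist_ip: "sqdist N u v = ip N u u + ip N v v - 2 * ip N u v"
  unfolding sqdist_def ip_def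
  by (simp add: power2_diff sum.distrib sum_subtractf sum_distrib_left power2_eq_square algebra_simps)

lemma jensen_ln:
  fixes c :: "'a \<Rightarrow> real"
  assumes fT: "finite T" and ne: "T \<noteq> {}" and pos: "\<And>t. t \<in> T \<Longrightarrow> c t > 0"
  shows "(\<Sum>t\<in>T. ln (c t)) / real (card T) \<le> ln ((\<Sum>t\<in>T. c t) / real (card T))"
proof -
  let ?m = "real (card T)"
  let ?a = "(\<Sum>t\<in>T. c t) / ?m"
  have m0: "?m > 0" using fT ne by (simp add: card_gt_0_iff)
  have "(\<Sum>t\<in>T. c t) > 0" using fT ne pos by (intro sum_pos) auto
  then have spos: "(\<Sum>t\<in>T. c t) > 0" .
  then have a0: "?a > 0" using m0 by simp
  have "ln (c t) \<le> ln ?a + (c t / ?a - 1)" if "t \<in> T" for t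
  proof -
    have "ln (c t / ?a) \<le> c t / ?a - 1" using pos[OF that] a0 spos m0 by (intro ln_le_minus_one) simp
    moreover have "ln (c t / ?a) = ln (c t) - ln ?a" using pos[OF that] a0 by (rule ln_divide_pos)
    ultimately show ?thesis by linarith
  qed
  then have L1: "(\<Sum>t\<in>T. ln (c t)) \<le> (\<Sum>t\<in>T. ln ?a + (c t / ?a - 1))" by (rule sum_mono)
  have gen: "\<And>s m::real. s > 0 \<Longrightarrow> m > 0 \<Longrightarrow> s / (s / m) = m" by simp
  have X: "(\<Sum>t\<in>T. c t) / ?a = ?m" using gen[OF spos m0] .
  note L1
  also have "(\<Sum>t\<in>T. ln ?a + (c t / ?a - 1)) = ?m * ln ?a + (\<Sum>t\<in>T. c t) / ?a - ?m"
  proof -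
    have "\<And>a. (\<Sum>t\<in>T. ln a + (c t / a - 1)) = ?m * ln a + (\<Sum>t\<in>T. c t) / a - ?m"
      by (simp add: sum.distrib sum_subtractf sum_divide_distrib[symmetric])
    then show ?thesis .
  qed
  also have "\<dots> = ?m * ln ?a" using X by linarith
  finally show ?thesis using m0 by (simp add: divide_le_eq mult.commute)
qed

lemma key:
  fixes T :: "(nat \<Rightarrow> real) set" and G :: "(nat \<Rightarrow> real) \<Rightarrow> (nat \<Rightarrow> real) \<Rightarrow> 'y::finite"
    and Dm :: "(nat \<Rightarrow> real) measure"
  assumes fT: "finite T" and ne: "T \<noteq> {}" and sph: "on_unit_sphere N T" and P: "prob_space Dm"
    and Gm: "\<And>t. t \<in> T \<Longrightarrow> (\<lambda>x. G x t) \<in> measurable Dm (count_space UNIV)"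
    and d: "0 < \<delta>"
  shows "0 \<le> cond_entropy_post T G Dm n \<and> cond_entropy_post T G Dm n \<le>
     ln (real (card {(t, t') \<in> T \<times> T. ip N t t' \<ge> 1 - \<delta>}) / real (card T))
     + ln (real (card T)) * prob_Z_pos N T G Dm n (2 * \<delta>)"
proof -
  let ?m = "real (card T)"
  define SL where "SL = sample_law n Dm"
  have m0: "?m > 0" using fT ne by (simp add: card_gt_0_iff)
  have m1: "?m \<ge> 1" using fT ne by (simp add: Suc_le_eq card_gt_0_iff)
  have PS: "prob_space SL" unfolding SL_def sample_law_def
    by (intro prob_space_PiM P)
  interpret S: prob_space SL by (rule PS)
  define cls where "cls xs s = {s'\<in>T. \<forall>i<n. G (xs i) s' = G (xs i) s}" for xs s
  define h where "h xs = cond_entropy_pmf (map_pmf (\<lambda>t. (t, labels G n xs t)) (pmf_of_set T))" for xs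
  have hform: "h xs = (\<Sum>s\<in>T. ln (real (card (cls xs s)))) / ?m" for xs
  proof -
    have "{s'\<in>T. labels G n xs s' = labels G n xs s} = cls xs s" for s
      unfolding cls_def labels_def by (auto simp: map_eq_conv)
    then show ?thesis unfolding h_def by (simp add: cond_entropy_formula[OF fT ne])
  qed
  have clsin: "s \<in> cls xs s" if "s \<in> T" for xs s using that by (simp add: cls_def)
  have clscard: "1 \<le> real (card (cls xs s))" "real (card (cls xs s)) \<le> ?m" if "s \<in> T" for xs s
  proof -
    have f: "finite (cls xs s)" using fT by (simp add: cls_def)
    show "1 \<le> real (card (cls xs s))" using clsin[OF that] f
      by (simp add: Suc_le_eq card_gt_0_iff) blast
    show "real (card (cls xs s)) \<le> ?m" using fT by (simp add: cls_def card_mono)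
  qed
  have h0: "0 \<le> h xs" for xs
    unfolding hform using m0 clscard by (intro divide_nonneg_pos sum_nonneg) auto
  define B where "B t = {t'\<in>T. 1 - \<delta> \<le> ip N t t'}" for t
  define E where "E t = {xs \<in> space SL. \<exists>t'\<in>T. (\<forall>i<n. G (xs i) t' = G (xs i) t) \<and> 2 * \<delta> \<le> sqdist N t t'}" for t
  have Bin: "t \<in> B t" if "t \<in> T" for t
    using that sph d by (auto simp: B_def on_unit_sphere_def)
  have Bcard: "1 \<le> real (card (B t))" if "t \<in> T" for t
  proof -
    have f: "finite (B t)" using fT by (simp add: B_def)
    show ?thesis using Bin[OF that] f by (simp add: Suc_le_eq card_gt_0_iff) blast
  qed
  have Emeas: "E t \<in> sets SL" if "t \<in> T" for t
  proof -
    have cm: "(\<lambda>xs. G (xs i) s) \<in> measurable SL (count_space UNIV)" if "i \<in> {..<n}" "s \<in> T" for i s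
      unfolding SL_def sample_law_def
      by (rule measurable_compose[OF measurable_component_singleton[OF that(1)] Gm[OF that(2)]])
    have "Measurable.pred SL (\<lambda>xs. \<exists>t'\<in>{t'\<in>T. 2 * \<delta> \<le> sqdist N t t'}. \<forall>i\<in>{..<n}. G (xs i) t' = G (xs i) t)"
    proof (intro pred_intros_finite)
      show "finite {t'\<in>T. 2 * \<delta> \<le> sqdist N t t'}" using fT by simp
      fix t' i assume "t' \<in> {t'\<in>T. 2 * \<delta> \<le> sqdist N t t'}" "i \<in> {..<n}"
      then have [measurable]: "(\<lambda>xs. G (xs i) t') \<in> measurable SL (count_space UNIV)"
          "(\<lambda>xs. G (xs i) t) \<in> measurable SL (count_space UNIV)" using cm that by auto
      have e: "(\<lambda>xs. G (xs i) t' = G (xs i) t) = (\<lambda>xs. \<exists>y\<in>UNIV. G (xs i) t' = y \<and> G (xs i) t = y)"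
        by auto
      have "Measurable.pred SL (\<lambda>xs. \<exists>y\<in>UNIV. G (xs i) t' = y \<and> G (xs i) t = y)"
        by measurable
      then show "Measurable.pred SL (\<lambda>xs. G (xs i) t' = G (xs i) t)" by (simp only: e)
    qed simp
    then have "{xs \<in> space SL. \<exists>t'\<in>{t'\<in>T. 2 * \<delta> \<le> sqdist N t t'}. \<forall>i\<in>{..<n}. G (xs i) t' = G (xs i) t} \<in> sets SL"
      by (rule pred_def[THEN iffD1])
    moreover have "{xs \<in> space SL. \<exists>t'\<in>{t'\<in>T. 2 * \<delta> \<le> sqdist N t t'}. \<forall>i\<in>{..<n}. G (xs i) t' = G (xs i) t} = E t"
      unfolding E_def by auto
    ultimately show ?thesis by simp
  qed
  have pw: "ln (real (card (cls xs t))) \<le> ln (real (card (B t))) + ln ?m * indicator (E t) xs"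
    if "xs \<in> space SL" "t \<in> T" for xs t
  proof (cases "xs \<in> E t")
    case True
    have a: "1 \<le> real (card (cls xs t))" "real (card (cls xs t)) \<le> ?m" using clscard[OF that(2), of xs] by auto
    have "ln (real (card (cls xs t))) \<le> ln ?m" 
    proof -
      have p: "0 < real (card (cls xs t))" using a(1) by linarith
      show ?thesis using ln_le_cancel_iff[OF p m0] a(2) by blast
    qed
    moreover have "0 \<le> ln (real (card (B t)))" using Bcard[OF that(2)] by simp
    ultimately show ?thesis using True by simp
  next
    case False
    have "cls xs t \<subseteq> B t"
    proof
      fix s assume s: "s \<in> cls xs t"
      then have sT: "s \<in> T" by (simp add: cls_def)
      have "\<not> 2 * \<delta> \<le> sqdist N t s" using False s that(1) sT unfolding E_def cls_def by auto
      moreover have "sqdist N t s = 2 - 2 * ip N t s"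
        using sph that(2) sT by (simp add: sqdist_ip on_unit_sphere_def)
      ultimately show "s \<in> B t" using sT by (simp add: B_def)
    qed
    then have "card (cls xs t) \<le> card (B t)" using fT by (intro card_mono) (auto simp: B_def)
    moreover have p: "0 < real (card (cls xs t))" using clscard(1)[OF that(2), of xs] by linarith
    moreover have p2: "0 < real (card (B t))" using Bcard[OF that(2)] by linarith
    ultimately have "ln (real (card (cls xs t))) \<le> ln (real (card (B t)))"
      using ln_le_cancel_iff[OF p p2] by simp
    then show ?thesis using False by simp
  qed
  define bnd where "bnd xs = (\<Sum>t\<in>T. ln (real (card (B t))) + ln ?m * indicator (E t) xs) / ?m" for xs
  have hb: "h xs \<le> bnd xs" if "xs \<in> space SL" for xs
    unfolding hform bnd_def using m0 pw[OF that]
    by (intro divide_right_mono sum_mono) auto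
  have intE: "integrable SL (indicator (E t) :: _ \<Rightarrow> real)" if "t \<in> T" for t
    using Emeas[OF that] by (intro integrable_real_indicator) (auto simp: S.emeasure_eq_measure)
  have ib: "integrable SL bnd" unfolding bnd_def
    using intE by (intro integrable_divide integrable_sum integrable_add integrable_mult_right) auto
  have Esub: "E t \<inter> space SL = E t" for t by (auto simp: E_def)
  define F where "F t xs = ln (real (card (B t))) + ln ?m * indicator (E t) xs" for t xs
  have iF: "integrable SL (F t)" if "t \<in> T" for t
    unfolding F_def by (rule Bochner_Integration.integrable_add[OF S.integrable_const integrable_mult_right[OF intE[OF that]]])
  have intbnd: "integral\<^sup>L SL bnd = (\<Sum>t\<in>T. ln (real (card (B t)))) / ?m + ln ?m * ((\<Sum>t\<in>T. measure SL (E t)) / ?m)"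
  proof -
    have b: "bnd = (\<lambda>xs. (\<Sum>t\<in>T. F t xs) / ?m)" unfolding bnd_def F_def by simp
    have "integral\<^sup>L SL bnd = integral\<^sup>L SL (\<lambda>xs. \<Sum>t\<in>T. F t xs) / ?m"
      unfolding b by (rule integral_divide_zero)
    also have "integral\<^sup>L SL (\<lambda>xs. \<Sum>t\<in>T. F t xs) = (\<Sum>t\<in>T. integral\<^sup>L SL (F t))"
      by (rule Bochner_Integration.integral_sum) (rule iF)
    also have "\<dots> = (\<Sum>t\<in>T. ln (real (card (B t))) + ln ?m * measure SL (E t))"
    proof (intro sum.cong refl)
      fix t assume t: "t \<in> T"
      have "integral\<^sup>L SL (F t) = integral\<^sup>L SL (\<lambda>xs. ln (real (card (B t)))) + integral\<^sup>L SL (\<lambda>xs. ln ?m * indicator (E t) xs)"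
        unfolding F_def by (intro Bochner_Integration.integral_add integrable_mult_right S.integrable_const) (rule intE[OF t])
      then show "integral\<^sup>L SL (F t) = ln (real (card (B t))) + ln ?m * measure SL (E t)"
        using Esub S.prob_space by simp
    qed
    finally show ?thesis by (simp add: sum.distrib sum_distrib_left add_divide_distrib)
  qed
  have pz: "prob_Z_pos N T G Dm n (2 * \<delta>) = (\<Sum>t\<in>T. measure SL (E t)) / ?m"
    unfolding prob_Z_pos_def E_def SL_def by simp
  have pairs: "{(t, t') \<in> T \<times> T. ip N t t' \<ge> 1 - \<delta>} = Sigma T B" by (auto simp: B_def)
  have cpairs: "real (card {(t, t') \<in> T \<times> T. ip N t t' \<ge> 1 - \<delta>}) = (\<Sum>t\<in>T. real (card (B t)))"
    unfolding pairs using fT by (subst card_SigmaI) (auto simp: B_def)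
  have jen: "(\<Sum>t\<in>T. ln (real (card (B t)))) / ?m \<le> ln (real (card {(t, t') \<in> T \<times> T. ip N t t' \<ge> 1 - \<delta>}) / ?m)"
    unfolding cpairs using Bcard by (intro jensen_ln fT ne) (auto intro: less_le_trans[of 0 1])
  have lnm: "0 \<le> ln ?m" using m1 by simp
  have mE: "0 \<le> (\<Sum>t\<in>T. measure SL (E t)) / ?m" using m0 by (simp add: sum_nonneg)
  have bndpos: "0 \<le> (\<Sum>t\<in>T. ln (real (card (B t)))) / ?m"
    using Bcard m0 by (intro divide_nonneg_pos sum_nonneg) auto
  have "integral\<^sup>L SL h \<le> integral\<^sup>L SL bnd"
  proof (cases "integrable SL h")
    case True
    then show ?thesis using ib hb by (intro integral_mono) auto
  next
    case False
    then show ?thesis unfolding not_integrable_integral_eq[OF False] intbnd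
      using lnm mE bndpos mult_nonneg_nonneg[OF lnm mE] by linarith
  qed
  moreover have "0 \<le> integral\<^sup>L SL h" using h0 by (intro integral_nonneg_AE) auto
  moreover have "cond_entropy_post T G Dm n = integral\<^sup>L SL h"
    unfolding cond_entropy_post_def SL_def h_def ..
  ultimately show ?thesis unfolding intbnd pz using jen by simp
qed


theorem proposition4:
  fixes \<Theta> :: "nat \<Rightarrow> (nat \<Rightarrow> real) set"
    and L :: "nat \<Rightarrow> nat"
    and D :: "nat \<Rightarrow> (nat \<Rightarrow> real) measure"
    and g :: "nat \<Rightarrow> (nat \<Rightarrow> real) \<Rightarrow> (nat \<Rightarrow> real) \<Rightarrow> 'y::finite"
    and n :: "nat \<Rightarrow> nat"
  assumes fin: "\<And>N. finite (\<Theta> N)"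
    and sphere: "\<And>N. on_unit_sphere N (\<Theta> N)"
    and M_inf: "filterlim (\<lambda>N. real (card (\<Theta> N))) at_top sequentially"
    and nonneg: "\<And>N t t'. t \<in> \<Theta> N \<Longrightarrow> t' \<in> \<Theta> N \<Longrightarrow> ip N t t' \<ge> 0"
    and D_prob: "\<And>N. prob_space (D N)"
    and D_borel: "\<And>N. sets (D N) = sets borel"
    and D_supp: "\<And>N. AE x in D N. \<forall>i\<ge>L N. x i = 0"
    and g_meas: "\<And>N t. t \<in> \<Theta> N \<Longrightarrow> (\<lambda>x. g N x t) \<in> measurable (D N) (count_space UNIV)"
    and A1: "\<exists>f. (\<forall>\<^sub>F \<delta> in at_right 0.
               (\<lambda>N. ln (real (card {(t, t') \<in> \<Theta> N \<times> \<Theta> N. ip N t t' \<ge> 1 - \<delta>})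
                         / real (card (\<Theta> N)))
                     / ln (real (card (\<Theta> N)))) \<longlonglongrightarrow> f \<delta>)
             \<and> (f \<longlongrightarrow> 0) (at_right 0)"
    and A2: "\<And>ts \<epsilon>. (\<And>N. ts N \<in> \<Theta> N) \<Longrightarrow> \<epsilon> > 0 \<Longrightarrow>
               (\<lambda>N. real (card {t' \<in> \<Theta> N. ip N t' (ts N) \<ge> \<epsilon>}) / real (card (\<Theta> N)))
               \<longlonglongrightarrow> 0"
    and noZ: "\<And>\<delta>. 0 < \<delta> \<Longrightarrow> \<delta> \<le> 2 \<Longrightarrow>
               (\<lambda>N. prob_Z_pos N (\<Theta> N) (g N) (D N) (n N) \<delta>) \<longlonglongrightarrow> 0"
  shows "(\<lambda>N. cond_entropy_post (\<Theta> N) (g N) (D N) (n N) / ln (real (card (\<Theta> N))))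
           \<longlonglongrightarrow> 0"
  proof -
  let ?Ae = "\<lambda>N \<delta>. ln (real (card {(t, t') \<in> \<Theta> N \<times> \<Theta> N. ip N t t' \<ge> 1 - \<delta>})
                         / real (card (\<Theta> N))) / ln (real (card (\<Theta> N)))"
  have ev2: "eventually (\<lambda>N. 2 \<le> real (card (\<Theta> N))) sequentially"
    using M_inf unfolding filterlim_at_top by blast
  obtain f where fA: "\<forall>\<^sub>F \<delta> in at_right 0. (\<lambda>N. ?Ae N \<delta>) \<longlonglongrightarrow> f \<delta>"
    and f0: "(f \<longlongrightarrow> 0) (at_right 0)" using A1 by blast
  show ?thesis
  proof (rule tendstoI)
    fix e :: real assume e: "0 < e"
    have "eventually (\<lambda>\<delta>. dist (f \<delta>) 0 < e/4) (at_right 0)" using f0 e by (intro tendstoD) auto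
    with fA have "eventually (\<lambda>\<delta>. (\<lambda>N. ?Ae N \<delta>) \<longlonglongrightarrow> f \<delta> \<and> dist (f \<delta>) 0 < e/4) (at_right 0)"
      by (rule eventually_conj)
    then obtain b :: real where b: "b > 0" and bP: "\<And>y. y > 0 \<Longrightarrow> y < b \<Longrightarrow>
        (\<lambda>N. ?Ae N y) \<longlonglongrightarrow> f y \<and> dist (f y) 0 < e/4"
      unfolding eventually_at_right_field by auto
    define \<delta> where "\<delta> = min (b/2) 1"
    have d0: "\<delta> > 0" and db: "\<delta> < b" and d1: "\<delta> \<le> 1" using b by (auto simp: \<delta>_def)
    have lim: "(\<lambda>N. ?Ae N \<delta>) \<longlonglongrightarrow> f \<delta>" and fs: "dist (f \<delta>) 0 < e/4" using bP[OF d0 db] by auto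
    have ev1: "eventually (\<lambda>N. dist (?Ae N \<delta>) (f \<delta>) < e/4) sequentially"
      using lim e by (intro tendstoD) auto
    have ev3: "eventually (\<lambda>N. dist (prob_Z_pos N (\<Theta> N) (g N) (D N) (n N) (2 * \<delta>)) 0 < e/2) sequentially"
      using noZ[of "2 * \<delta>"] d0 d1 e by (intro tendstoD) auto
    show "eventually (\<lambda>N. dist (cond_entropy_post (\<Theta> N) (g N) (D N) (n N) / ln (real (card (\<Theta> N)))) 0 < e) sequentially"
      using ev2 ev1 ev3
    proof eventually_elim
      case (elim N)
      let ?m = "real (card (\<Theta> N))"
      let ?C = "cond_entropy_post (\<Theta> N) (g N) (D N) (n N)"
      let ?pz = "prob_Z_pos N (\<Theta> N) (g N) (D N) (n N) (2 * \<delta>)"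
      let ?L = "ln (real (card {(t, t') \<in> \<Theta> N \<times> \<Theta> N. ip N t t' \<ge> 1 - \<delta>}) / ?m)"
      have ne: "\<Theta> N \<noteq> {}" using elim(1) by auto
      have K: "0 \<le> ?C \<and> ?C \<le> ?L + ln ?m * ?pz"
        by (rule key[OF fin ne sphere D_prob g_meas d0])
      have lm: "ln ?m > 0" using elim(1) by simp
      have "?C / ln ?m \<le> (?L + ln ?m * ?pz) / ln ?m" using K lm by (intro divide_right_mono) auto
      also have "\<dots> = ?L / ln ?m + ?pz" using lm by (simp add: add_divide_distrib)
      finally have up: "?C / ln ?m \<le> ?Ae N \<delta> + ?pz" by simp
      have lo: "0 \<le> ?C / ln ?m" using K lm by simp
      have a1: "\<bar>?Ae N \<delta> - f \<delta>\<bar> < e/4" using elim(2) by (simp only: dist_real_def)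
      have a2: "\<bar>f \<delta> - 0\<bar> < e/4" using fs by (simp only: dist_real_def)
      have "?Ae N \<delta> < e/2" using a1 a2 unfolding abs_less_iff by linarith
      moreover have "?pz < e/2" using elim(3) by (simp add: dist_real_def abs_less_iff)
      ultimately have "?C / ln ?m < e" using up by linarith
      then have "\<bar>?C / ln ?m - 0\<bar> < e" using lo by simp
      then show ?case by (simp only: dist_real_def)
    qed
  qed
qed

end
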